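(* Let $(Y,\|\cdot\|)$ be a Banach space, $(T_t)_{t\ge0}$ a strongly continuous semigroup of bounded linear operators on $Y$ with infinitesimal generator $L$ and domain $D(L)$. Let $A$ be a linear operator defined on a linear subspace $D(A)\subset Y$ with values in $Y$. Assume $\xi\colon\mathbb{R}\to D(A)$ is such that $t\mapsto\xi(t)$ is differentiable in $Y$, $t\mapsto\xi'(t)$ is continuous in $Y$, $t\mapsto A\xi(t)$ is continuous in $Y$, $t\mapsto\xi(t)$ has compact support in $\mathbb{R}$, and $$\int_s^\infty T_{u-s}\big[\xi'(u)+A\xi(u)\big]\,du=-\xi(s),\qquad s\in\mathbb{R}$$ (Riemann integral of a $Y$-valued function). Then $\xi(t)\in D(L)$ and $L\xi(t)=A\xi(t)$ for all $t\in\mathbb{R}$. *)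

theory Defs
  imports "HOL-Analysis.Analysis"
begin

text \<open>A strongly continuous (C0) semigroup of bounded linear operators on a Banach space,
  indexed by t \<ge> 0 (values of T at negative times are irrelevant).\<close>
definition strongly_continuous_semigroup :: "(real \<Rightarrow> 'a::banach \<Rightarrow> 'a) \<Rightarrow> bool" where
  "strongly_continuous_semigroup T \<longleftrightarrow>
     (\<forall>t\<ge>0. bounded_linear (T t)) \<and>
     T 0 = id \<and>
     (\<forall>s\<ge>0. \<forall>t\<ge>0. T (s + t) = T s \<circ> T t) \<and>
     (\<forall>x. ((\<lambda>t. T t x) \<longlongrightarrow> x) (at_right 0))"

definition gen_domain :: "(real \<Rightarrow> 'a::banach \<Rightarrow> 'a) \<Rightarrow> 'a set" where
  "gen_domain T = {x. \<exists>y. ((\<lambda>h. (1 / h) *\<^sub>R (T h x - x)) \<longlongrightarrow> y) (at_right 0)}"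

text \<open>The infinitesimal generator (meaningful on gen_domain T).\<close>
definition generator :: "(real \<Rightarrow> 'a::banach \<Rightarrow> 'a) \<Rightarrow> 'a \<Rightarrow> 'a" where
  "generator T x = Lim (at_right 0) (\<lambda>h. (1 / h) *\<^sub>R (T h x - x))"

definition linear_on :: "'a::real_vector set \<Rightarrow> ('a \<Rightarrow> 'b::real_vector) \<Rightarrow> bool" where
  "linear_on D A \<longleftrightarrow> subspace D \<and>
     (\<forall>x\<in>D. \<forall>y\<in>D. A (x + y) = A x + A y) \<and>
     (\<forall>c. \<forall>x\<in>D. A (c *\<^sub>R x) = c *\<^sub>R A x)"

end

theory Submission
  imports Defs
begin

lemma ubp:
  fixes g :: "nat \<Rightarrow> 'a::banach \<Rightarrow> 'b::real_normed_vector"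
  assumes bl: "\<And>n. bounded_linear (g n)" and pb: "\<And>x. \<exists>B. \<forall>n. norm (g n x) \<le> B"
  shows "\<exists>M. \<forall>n x. norm (g n x) \<le> M * norm x"
proof -
  define C where "C k = (\<Inter>n. {x. norm (g n x) \<le> real k})" for k::nat
  have cl: "closed (C k)" for k
    unfolding C_def
    by (intro closed_INT ballI closed_Collect_le continuous_intros
          linear_continuous_on bl continuous_on_const)
  have un: "(\<Union>k. C k) = UNIV"
  proof (auto)
    fix x
    obtain B where B: "\<forall>n. norm (g n x) \<le> B" using pb by blast
    obtain k::nat where "B \<le> real k" using real_arch_simple by blast
    then have "x \<in> C k" using B unfolding C_def by (auto intro: order_trans)
    then show "\<exists>k. x \<in> C k" by blast
  qed
  have "\<exists>k. interior (C k) \<noteq> {}"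
  proof (rule ccontr)
    assume "\<not> ?thesis"
    then have "euclidean interior_of \<Union>(range C) = {}"
      by (intro Baire_category_alt) (auto simp: completely_metrizable_space_euclidean cl)
    then show False using un by simp
  qed
  then obtain k x0 where "x0 \<in> interior (C k)" by blast
  then obtain r where r: "r > 0" "ball x0 r \<subseteq> C k"
    by (meson open_contains_ball open_interior interior_subset order_trans)
  have x0: "x0 \<in> C k" using r by auto
  show ?thesis
  proof (intro exI allI)
    fix n x
    show "norm (g n x) \<le> (4 * real k / r) * norm x"
    proof (cases "x = 0")
      case True
      then show ?thesis using linear_0[OF bounded_linear.linear[OF bl]] by simp
    next
      case False
      define c where "c = r / 2 / norm x"
      have c: "c > 0" using False r by (simp add: c_def)
      have "norm (c *\<^sub>R x) = r / 2" using False r by (simp add: c_def)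
      then have "x0 + c *\<^sub>R x \<in> ball x0 r" using r by (simp add: dist_norm)
      then have "x0 + c *\<^sub>R x \<in> C k" using r by auto
      then have h1: "norm (g n (x0 + c *\<^sub>R x)) \<le> k" unfolding C_def by auto
      have h2: "norm (g n x0) \<le> k" using x0 unfolding C_def by auto
      have "g n (c *\<^sub>R x) = g n (x0 + c *\<^sub>R x) - g n x0"
        using bounded_linear.linear[OF bl] by (simp add: linear_add linear_diff)
      then have "norm (g n (c *\<^sub>R x)) \<le> 2 * k"
        using h1 h2 norm_triangle_ineq4[of "g n (x0 + c *\<^sub>R x)" "g n x0"] by simp
      moreover have "g n (c *\<^sub>R x) = c *\<^sub>R g n x"
        using bounded_linear.linear[OF bl] by (simp add: linear_scale)
      ultimately have "c * norm (g n x) \<le> 2 * k" using c by simp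
      then have "norm (g n x) \<le> 2 * k / c" using c by (simp add: field_simps)
      also have "2 * k / c = (4 * real k / r) * norm x"
        using False r by (simp add: c_def field_simps)
      finally show ?thesis .
    qed
  qed
qed

lemma sg_bound:
  fixes T :: "real \<Rightarrow> 'a::banach \<Rightarrow> 'a"
  assumes sg: "strongly_continuous_semigroup T"
  shows "\<exists>d>0. \<exists>M. \<forall>v x. 0 \<le> v \<and> v \<le> d \<longrightarrow> norm (T v x) \<le> M * norm x"
proof (rule ccontr)
  assume H: "\<not> ?thesis"
  have "\<forall>n::nat. \<exists>v x. 0 \<le> v \<and> v \<le> 1 / Suc n \<and> norm (T v x) > real n * norm x"
  proof
    fix n :: nat
    have "1 / real (Suc n) > 0" by simp
    with H show "\<exists>v x. 0 \<le> v \<and> v \<le> 1 / Suc n \<and> norm (T v x) > real n * norm x"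
      by (metis not_le)
  qed
  then obtain v xs where v: "\<And>n. 0 \<le> v n" "\<And>n. v n \<le> 1 / Suc n"
    and xs: "\<And>n. norm (T (v n) (xs n)) > real n * norm (xs n)"
    by metis
  have bl: "bounded_linear (T (v n))" for n
    using sg v unfolding strongly_continuous_semigroup_def by blast
  have pb: "\<exists>B. \<forall>n. norm (T (v n) x) \<le> B" for x
  proof -
    have "((\<lambda>t. T t x) \<longlongrightarrow> x) (at_right 0)"
      using sg unfolding strongly_continuous_semigroup_def by blast
    then have "\<forall>\<^sub>F t in at_right 0. dist (T t x) x < 1"
      by (rule tendstoD) simp
    then obtain d where d: "d > 0" "\<And>t. 0 < t \<Longrightarrow> t < d \<Longrightarrow> dist (T t x) x < 1"
      by (auto simp: eventually_at_right_field)
    obtain N :: nat where N: "1 / Suc N < d"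
      using d(1) by (metis nat_approx_posE)
    define B where "B = (\<Sum>n<N. norm (T (v n) x)) + norm x + 1"
    have "norm (T (v n) x) \<le> B" for n
    proof (cases "n < N")
      case True
      have "norm (T (v n) x) \<le> (\<Sum>n<N. norm (T (v n) x))"
        using True by (intro member_le_sum) auto
      then show ?thesis unfolding B_def by (smt (verit) norm_ge_zero)
    next
      case False
      have "v n \<le> 1 / Suc N"
        using v(2)[of n] False
        by (meson frac_le less_eq_real_def not_less of_nat_le_iff order_trans Suc_le_mono zero_less_one
              of_nat_0_less_iff zero_less_Suc)
      then have vd: "v n < d" using N by simp
      show ?thesis
      proof (cases "v n = 0")
        case True
        then have "T (v n) x = x" using sg unfolding strongly_continuous_semigroup_def by simp
        then show ?thesis unfolding B_def by (simp add: sum_nonneg)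
      next
        case False
        then have "dist (T (v n) x) x < 1" using d(2) v(1)[of n] vd by simp
        then have "norm (T (v n) x) \<le> norm x + 1"
          by (metis dist_norm add.commute less_imp_le norm_triangle_ineq2 order_trans
              add_le_cancel_left diff_le_eq)
        then show ?thesis unfolding B_def by (smt (verit) sum_nonneg norm_ge_zero)
      qed
    qed
    then show ?thesis by blast
  qed
  obtain M where M: "\<And>n x. norm (T (v n) x) \<le> M * norm x"
    using ubp[of "\<lambda>n. T (v n)", OF bl pb] by blast
  obtain n :: nat where n: "M \<le> real n" using real_arch_simple by blast
  have "real n * norm (xs n) \<ge> M * norm (xs n)" using n by (simp add: mult_right_mono)
  with M[of n "xs n"] xs[of n] show False by simp
qed

theorem theorem4p4:
  fixes T :: "real \<Rightarrow> 'a::banach \<Rightarrow> 'a"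
    and A :: "'a \<Rightarrow> 'a" and DA :: "'a set"
    and \<xi> \<xi>' :: "real \<Rightarrow> 'a"
  assumes "strongly_continuous_semigroup T"
    and "linear_on DA A"
    and "\<And>t. \<xi> t \<in> DA"
    and "\<And>t. (\<xi> has_vector_derivative \<xi>' t) (at t)"
    and "continuous_on UNIV \<xi>'"
    and "continuous_on UNIV (\<lambda>t. A (\<xi> t))"
    and "compact (closure {t. \<xi> t \<noteq> 0})"
    and "\<And>s. ((\<lambda>u. T (u - s) (\<xi>' u + A (\<xi> u))) has_integral (- \<xi> s)) {s..}"
  shows "\<forall>t. \<xi> t \<in> gen_domain T \<and> generator T (\<xi> t) = A (\<xi> t)"
proof
  fix s
  note sg = assms(1)
  define f where "f u = \<xi>' u + A (\<xi> u)" for u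
  have Hint: "\<And>s. ((\<lambda>u. T (u - s) (f u)) has_integral (- \<xi> s)) {s..}"
    using assms(8) unfolding f_def .
  have blT: "\<And>t. t \<ge> 0 \<Longrightarrow> bounded_linear (T t)"
    and T0: "T 0 = id"
    and Tadd: "\<And>a b. a \<ge> 0 \<Longrightarrow> b \<ge> 0 \<Longrightarrow> T (a + b) = T a \<circ> T b"
    and Tc: "\<And>x. ((\<lambda>t. T t x) \<longlongrightarrow> x) (at_right 0)"
    using sg unfolding strongly_continuous_semigroup_def by auto
  define J where "J h = integral {s - h..s} (\<lambda>u. T (u - (s - h)) (f u))" for h
  have Jint: "((\<lambda>u. T (u - (s - h)) (f u)) has_integral J h) {s - h..s}" if h: "h > 0" for h
  proof -
    have L: "((\<lambda>u. T (u - (s - h)) (f u)) has_integral - \<xi> (s - h)) {s - h..}"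
      by (rule Hint)
    have "(\<lambda>u. T (u - (s - h)) (f u)) integrable_on {s - h..s}"
      by (rule integrable_on_subinterval[OF has_integral_integrable[OF L]]) auto
    then show ?thesis
      unfolding J_def by (rule integrable_integral)
  qed
  have ident: "T h (\<xi> s) - \<xi> s = (\<xi> (s - h) - \<xi> s) + J h" if h: "h > 0" for h
  proof -
    have K0: "((T h \<circ> (\<lambda>u. T (u - s) (f u))) has_integral T h (- \<xi> s)) {s..}"
      by (rule has_integral_linear[OF Hint blT]) (use h in simp)
    have K: "((\<lambda>u. T (u - (s - h)) (f u)) has_integral - T h (\<xi> s)) {s..}"
    proof -
      have "(T h \<circ> (\<lambda>u. T (u - s) (f u))) u = T (u - (s - h)) (f u)" if "u \<in> {s..}" for u
      proof -
        have "T (h + (u - s)) = T h \<circ> T (u - s)" using that h by (intro Tadd) auto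
        moreover have "h + (u - s) = u - (s - h)" by simp
        ultimately show ?thesis by simp
      qed
      moreover have "T h (- \<xi> s) = - T h (\<xi> s)"
        using blT[of h] h by (simp add: linear_neg bounded_linear.linear)
      ultimately have eq: "\<And>u. u \<in> {s..} \<Longrightarrow> (T h \<circ> (\<lambda>u. T (u - s) (f u))) u = T (u - (s - h)) (f u)"
        and eq2: "T h (- \<xi> s) = - T h (\<xi> s)" by blast+
      have "((T h \<circ> (\<lambda>u. T (u - s) (f u))) has_integral T h (- \<xi> s)) {s..} =
            ((\<lambda>u. T (u - (s - h)) (f u)) has_integral T h (- \<xi> s)) {s..}"
        by (rule has_integral_cong) (rule eq)
      with K0 eq2 show ?thesis by simp
    qed
    have L: "((\<lambda>u. T (u - (s - h)) (f u)) has_integral - \<xi> (s - h)) {s - h..}"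
      by (rule Hint)
    have Jh: "((\<lambda>u. T (u - (s - h)) (f u)) has_integral J h) {s - h..s}"
      by (rule Jint[OF h])
    have "negligible ({s - h..s} \<inter> {s..})"
    proof -
      have "{s - h..s} \<inter> {s..} = {s}" using h by auto
      then show ?thesis by simp
    qed
    from has_integral_Un[OF Jh K this]
    have "((\<lambda>u. T (u - (s - h)) (f u)) has_integral (J h - T h (\<xi> s))) {s - h..}"
    proof -
      have "{s - h..s} \<union> {s..} = {s - h..}" using h by auto
      then show "((\<lambda>u. T (u - (s - h)) (f u)) has_integral J h + - T h (\<xi> s)) ({s - h..s} \<union> {s..}) \<Longrightarrow> ?thesis"
        by simp
    qed
    then have "J h - T h (\<xi> s) = - \<xi> (s - h)" using L by (rule has_integral_unique)
    then show ?thesis by (simp add: algebra_simps)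
  qed
  have lim1: "((\<lambda>h. (1 / h) *\<^sub>R (\<xi> (s - h) - \<xi> s)) \<longlongrightarrow> - \<xi>' s) (at_right 0)"
  proof -
    have "(\<xi> has_derivative (\<lambda>x. x *\<^sub>R \<xi>' s)) (at s)"
      using assms(4)[of s] unfolding has_vector_derivative_def .
    then have D: "((\<lambda>h. norm (\<xi> (s + h) - \<xi> s - h *\<^sub>R \<xi>' s) / norm h) \<longlongrightarrow> 0) (at 0)"
      unfolding has_derivative_at by blast
    have F: "filterlim (\<lambda>h::real. - h) (at 0) (at_right 0)"
      unfolding filterlim_at
    proof
      show "\<forall>\<^sub>F x in at_right 0. - x \<in> UNIV \<and> - x \<noteq> (0::real)"
        using eventually_at_right_less[of "0::real"] by eventually_elim simp
      show "((\<lambda>h::real. - h) \<longlongrightarrow> 0) (at_right 0)"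
        by (rule tendsto_minus_cancel_left[THEN iffD1]) (simp add: tendsto_ident_at)
    qed
    have D2: "((\<lambda>h. norm (\<xi> (s + - h) - \<xi> s - (- h) *\<^sub>R \<xi>' s) / norm (- h)) \<longlongrightarrow> 0) (at_right 0)"
      by (rule filterlim_compose[OF D F])
    have "\<forall>\<^sub>F h in at_right 0. norm (\<xi> (s + - h) - \<xi> s - (- h) *\<^sub>R \<xi>' s) / norm (- h)
        = norm ((1 / h) *\<^sub>R (\<xi> (s - h) - \<xi> s) - - \<xi>' s)"
      using eventually_at_right_less[of "0::real"]
    proof eventually_elim
      case (elim h)
      have "(1 / h) *\<^sub>R (\<xi> (s - h) - \<xi> s) - - \<xi>' s
           = (1 / h) *\<^sub>R (\<xi> (s + - h) - \<xi> s - (- h) *\<^sub>R \<xi>' s)"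
        using elim by (simp add: algebra_simps)
      then show ?case using elim by (simp add: divide_simps)
    qed
    with D2 have "((\<lambda>h. norm ((1 / h) *\<^sub>R (\<xi> (s - h) - \<xi> s) - - \<xi>' s)) \<longlongrightarrow> 0) (at_right 0)"
      by (rule Lim_transform_eventually)
    then show ?thesis
      by (subst Lim_null) (simp only: tendsto_norm_zero_iff)
  qed
  obtain d0 M where d0: "d0 > 0"
    and M: "\<And>v x. 0 \<le> v \<Longrightarrow> v \<le> d0 \<Longrightarrow> norm (T v x) \<le> M * norm x"
    using sg_bound[OF sg] by blast
  define M' where "M' = max M 1"
  have M'pos: "M' > 0" by (simp add: M'_def)
  have M': "norm (T v x) \<le> M' * norm x" if "0 \<le> v" "v \<le> d0" for v x
  proof -
    have "M * norm x \<le> M' * norm x" by (simp add: M'_def mult_right_mono)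
    with M[OF that, of x] show ?thesis by linarith
  qed
  have contf: "isCont f s"
  proof -
    have "continuous_on UNIV f" unfolding f_def
      by (intro continuous_on_add assms(5) assms(6))
    then show ?thesis by (simp add: continuous_on_eq_continuous_at)
  qed
  have lim2: "((\<lambda>h. (1 / h) *\<^sub>R J h) \<longlongrightarrow> f s) (at_right 0)"
  proof (rule tendstoI)
    fix e :: real assume e: "e > 0"
    obtain d1 where d1: "d1 > 0" "\<And>u. dist u s < d1 \<Longrightarrow> dist (f u) (f s) < e / (4 * M')"
    proof -
      have "e / (4 * M') > 0" using e M'pos by simp
      then show ?thesis using contf that unfolding continuous_at_eps_delta by blast
    qed
    have "\<forall>\<^sub>F v in at_right 0. dist (T v (f s)) (f s) < e / 4"
      using Tc[of "f s"] e by (intro tendstoD) auto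
    then obtain d2 where d2: "d2 > 0" "\<And>v. 0 < v \<Longrightarrow> v < d2 \<Longrightarrow> dist (T v (f s)) (f s) < e / 4"
      by (auto simp: eventually_at_right_field)
    show "\<forall>\<^sub>F h in at_right 0. dist ((1 / h) *\<^sub>R J h) (f s) < e"
      unfolding eventually_at_right_field
    proof (intro exI conjI allI impI)
      show "min d0 (min d1 d2) > 0" using d0 d1 d2 by simp
      fix h :: real assume h: "h > 0" "h < min d0 (min d1 d2)"
      have Jh: "((\<lambda>u. T (u - (s - h)) (f u)) has_integral J h) {s - h..s}"
        using Jint[OF h(1)] .
      have C: "((\<lambda>u. f s) has_integral h *\<^sub>R f s) {s - h..s}"
        using has_integral_const_real[of "f s" "s - h" s] h by simp
      have Dg: "((\<lambda>u. T (u - (s - h)) (f u) - f s) has_integral (J h - h *\<^sub>R f s)) (cbox (s - h) s)"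
        using has_integral_diff[OF Jh C] by (simp add: cbox_interval)
      have bnd: "norm (T (u - (s - h)) (f u) - f s) \<le> e / 2" if u: "u \<in> cbox (s - h) s" for u
      proof -
        define v where "v = u - (s - h)"
        have v: "0 \<le> v" "v \<le> h" using u by (auto simp: v_def cbox_interval)
        have blv: "bounded_linear (T v)" using blT v by simp
        have split: "T v (f u) - f s = T v (f u - f s) + (T v (f s) - f s)"
          using bounded_linear.linear[OF blv] by (simp add: linear_diff)
        have "dist u s < d1" using u h by (auto simp: cbox_interval dist_real_def)
        then have fu: "norm (f u - f s) < e / (4 * M')" using d1(2) by (simp add: dist_norm)
        have "norm (T v (f u - f s)) \<le> M' * norm (f u - f s)"
          using M' v h by simp
        also have "\<dots> \<le> M' * (e / (4 * M'))"
          using fu M'pos by (intro mult_left_mono) auto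
        also have "\<dots> = e / 4" using M'pos by simp
        finally have n1: "norm (T v (f u - f s)) \<le> e / 4" .
        have n2: "norm (T v (f s) - f s) \<le> e / 4"
        proof (cases "v = 0")
          case True
          then show ?thesis using T0 e by simp
        next
          case False
          then have "dist (T v (f s)) (f s) < e / 4" using d2 v h by simp
          then show ?thesis by (simp add: dist_norm)
        qed
        have "norm (T v (f u) - f s) \<le> norm (T v (f u - f s)) + norm (T v (f s) - f s)"
          unfolding split by (rule norm_triangle_ineq)
        with n1 n2 show ?thesis unfolding v_def by simp
      qed
      have "norm (J h - h *\<^sub>R f s) \<le> e / 2 * Henstock_Kurzweil_Integration.content (cbox (s - h) s)"
        by (rule has_integral_bound[OF _ Dg bnd]) (use e in auto)
      also have "Henstock_Kurzweil_Integration.content (cbox (s - h) s) = h" using h by (simp add: cbox_interval)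
      finally have nb: "norm (J h - h *\<^sub>R f s) \<le> e / 2 * h" .
      have "(1 / h) *\<^sub>R J h - f s = (1 / h) *\<^sub>R (J h - h *\<^sub>R f s)"
        using h by (simp add: algebra_simps)
      then have "dist ((1 / h) *\<^sub>R J h) (f s) = norm (J h - h *\<^sub>R f s) / h"
        using h by (simp add: dist_norm)
      also have "\<dots> \<le> e / 2" using nb h by (simp add: divide_simps)
      also have "\<dots> < e" using e by simp
      finally show "dist ((1 / h) *\<^sub>R J h) (f s) < e" .
    qed
  qed
  have "((\<lambda>h. (1 / h) *\<^sub>R (\<xi> (s - h) - \<xi> s) + (1 / h) *\<^sub>R J h) \<longlongrightarrow> - \<xi>' s + f s) (at_right 0)"
    by (intro tendsto_add lim1 lim2)
  moreover have "- \<xi>' s + f s = A (\<xi> s)" by (simp add: f_def)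
  ultimately have "((\<lambda>h. (1 / h) *\<^sub>R (\<xi> (s - h) - \<xi> s) + (1 / h) *\<^sub>R J h) \<longlongrightarrow> A (\<xi> s)) (at_right 0)"
    by simp
  moreover have "\<forall>\<^sub>F h in at_right 0. (1 / h) *\<^sub>R (\<xi> (s - h) - \<xi> s) + (1 / h) *\<^sub>R J h
      = (1 / h) *\<^sub>R (T h (\<xi> s) - \<xi> s)"
    using eventually_at_right_less[of "0::real"]
    by eventually_elim (simp add: ident scaleR_add_right)
  ultimately have lim: "((\<lambda>h. (1 / h) *\<^sub>R (T h (\<xi> s) - \<xi> s)) \<longlongrightarrow> A (\<xi> s)) (at_right 0)"
    by (rule Lim_transform_eventually)
  show "\<xi> s \<in> gen_domain T \<and> generator T (\<xi> s) = A (\<xi> s)"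
  proof
    show "\<xi> s \<in> gen_domain T" unfolding gen_domain_def using lim by blast
    show "generator T (\<xi> s) = A (\<xi> s)" unfolding generator_def
      by (rule tendsto_Lim[OF trivial_limit_at_right_real lim])
  qed
qed

end
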